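(* Let $m\ge n$, let $\Omega$ be a convex subset of $M_{m\times n}(\mathbb{C})$, and let $\Omega_d$ be the set of matrices in $\Omega$ having distinct singular values. Then $\Omega_d$ is dense in $\Omega$ if and only if the closure $\overline{\Omega}$ contains a matrix having distinct singular values.
   Context: $M_{m\times n}(\mathbb{C})$ denotes the set of $m\times n$ complex matrices with the topology induced by the Frobenius norm; throughout $m\ge n$. The singular values of $A\in M_{m\times n}(\mathbb{C})$ are the $n$ nonnegative square roots of the eigenvalues of $A^{\ast}A$, counted with multiplicity; $A$ has distinct singular values if these $n$ values are pairwise different. *)

theory Defs
  imports "HOL-Analysis.Analysis" "HOL-Computational_Algebra.Fundamental_Theorem_Algebra"
begin

text \<open>m x n complex matrices are complex^'n^'m (rows indexed by 'm, columns by 'n);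
  the norm on this type is the Frobenius norm.\<close>

definition conj_transpose :: "complex^'n^'m \<Rightarrow> complex^'m^'n" where
  "conj_transpose A = (\<chi> i j. cnj (A $ j $ i))"

definition char_poly_mat :: "complex^'n^'n \<Rightarrow> complex poly" where
  "char_poly_mat B = det (\<chi> i j. (if i = j then [:0, 1:] else 0) - [:B $ i $ j:])"

definition singular_values :: "complex^'n^'m \<Rightarrow> real multiset" where
  "singular_values A =
     image_mset (\<lambda>z. sqrt (Re z)) (proots (char_poly_mat (conj_transpose A ** A)))"

definition distinct_singular_values :: "complex^'n^'m \<Rightarrow> bool" where
  "distinct_singular_values A \<longleftrightarrow> (\<forall>s. count (singular_values A) s \<le> 1)"

end

theory Submission
  imports Defs "Subresultants.Subresultant_Gcd" "HOL-Computational_Algebra.Field_as_Ring"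
begin

no_notation Matrix.vec_index (infixl "$" 100)

definition rclosed :: "('x \<Rightarrow> 'b::comm_ring_1) set \<Rightarrow> bool" where
  "rclosed G \<longleftrightarrow> (\<forall>c. (\<lambda>x. c) \<in> G) \<and> (\<forall>f\<in>G. \<forall>g\<in>G. (\<lambda>x. f x + g x) \<in> G)
     \<and> (\<forall>f\<in>G. \<forall>g\<in>G. (\<lambda>x. f x * g x) \<in> G)"

lemma rclosed_const: "rclosed G \<Longrightarrow> (\<lambda>x. c) \<in> G"
  unfolding rclosed_def by blast
lemma rclosed_add: "rclosed G \<Longrightarrow> f \<in> G \<Longrightarrow> g \<in> G \<Longrightarrow> (\<lambda>x. f x + g x) \<in> G"
  unfolding rclosed_def by blast
lemma rclosed_mult: "rclosed G \<Longrightarrow> f \<in> G \<Longrightarrow> g \<in> G \<Longrightarrow> (\<lambda>x. f x * g x) \<in> G"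
  unfolding rclosed_def by blast
lemma rclosed_diff: "rclosed G \<Longrightarrow> f \<in> G \<Longrightarrow> g \<in> G \<Longrightarrow> (\<lambda>x. f x - g x) \<in> G"
proof -
  assume G: "rclosed G" "f \<in> G" "g \<in> G"
  have "(\<lambda>x. f x + (-1) * g x) \<in> G"
    by (intro rclosed_add rclosed_mult rclosed_const G)
  then show ?thesis by simp
qed

lemma rclosed_sum: "rclosed G \<Longrightarrow> (\<And>i. i \<in> S \<Longrightarrow> f i \<in> G) \<Longrightarrow> (\<lambda>x. \<Sum>i\<in>S. f i x) \<in> G"
proof (induction S rule: infinite_finite_induct)
  case (infinite A) then show ?case by (simp add: rclosed_const)
next
  case empty then show ?case by (simp add: rclosed_const)
next
  case (insert a F)
  then show ?case by (simp add: rclosed_add)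
qed

lemma rclosed_prod: "rclosed G \<Longrightarrow> (\<And>i. i \<in> S \<Longrightarrow> f i \<in> G) \<Longrightarrow> (\<lambda>x. \<Prod>i\<in>S. f i x) \<in> G"
proof (induction S rule: infinite_finite_induct)
  case (infinite A) then show ?case by (simp add: rclosed_const)
next
  case empty then show ?case by (simp add: rclosed_const)
next
  case (insert a F)
  then show ?case by (simp add: rclosed_mult)
qed

lemma rclosed_det:
  fixes M :: "'x \<Rightarrow> 'b::comm_ring_1^'n^'n"
  assumes G: "rclosed G" and e: "\<And>i j. (\<lambda>x. M x $ i $ j) \<in> G"
  shows "(\<lambda>x. Determinants.det (M x)) \<in> G"
  unfolding Determinants.det_def
  by (intro rclosed_sum rclosed_mult rclosed_const rclosed_prod G e)

lemma rclosed_jdet: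
  fixes M :: "'x \<Rightarrow> 'b::comm_ring_1 mat"
  assumes G: "rclosed G" and dim: "\<And>x. M x \<in> carrier_mat N N"
    and e: "\<And>i j. i < N \<Longrightarrow> j < N \<Longrightarrow> (\<lambda>x. M x $$ (i,j)) \<in> G"
  shows "(\<lambda>x. Determinant.det (M x)) \<in> G"
proof -
  have "(\<lambda>x. \<Sum>p | p permutes {0..<N}. of_int (sign p) * (\<Prod>i = 0..<N. M x $$ (i, p i))) \<in> G"
  proof (intro rclosed_sum rclosed_mult rclosed_const rclosed_prod G e)
    fix p i assume "p \<in> {p. p permutes {0..<N}}" "i \<in> {0..<N}"
    then show "i < N" "p i < N" by (auto simp: permutes_in_image)
  qed
  moreover have "Determinant.det (M x) = (\<Sum>p | p permutes {0..<N}. of_int (sign p) * (\<Prod>i = 0..<N. M x $$ (i, p i)))" for x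
    using dim[of x] unfolding Determinant.det_def by auto
  ultimately show ?thesis by simp
qed

definition coeffG :: "('x \<Rightarrow> 'b::comm_ring_1) set \<Rightarrow> ('x \<Rightarrow> 'b poly) set" where
  "coeffG G = {Q. \<forall>k. (\<lambda>x. coeff (Q x) k) \<in> G}"

lemma rclosedI:
  assumes "\<And>c. (\<lambda>x. c) \<in> G" "\<And>f g. f \<in> G \<Longrightarrow> g \<in> G \<Longrightarrow> (\<lambda>x. f x + g x) \<in> G"
    "\<And>f g. f \<in> G \<Longrightarrow> g \<in> G \<Longrightarrow> (\<lambda>x. f x * g x) \<in> G"
  shows "rclosed G"
  using assms unfolding rclosed_def by blast

lemma rclosed_coeffG: assumes G: "rclosed G" shows "rclosed (coeffG G)"
proof (rule rclosedI)
  fix c :: "'b poly" show "(\<lambda>x. c) \<in> coeffG G" unfolding coeffG_def by (simp add: rclosed_const[OF G])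
next
  fix f g :: "'a \<Rightarrow> 'b poly"
  assume "f \<in> coeffG G" "g \<in> coeffG G"
  then show "(\<lambda>x. f x + g x) \<in> coeffG G" unfolding coeffG_def by (simp add: rclosed_add G)
next
  fix f g :: "'a \<Rightarrow> 'b poly"
  assume "f \<in> coeffG G" "g \<in> coeffG G"
  then have a: "\<forall>k. (\<lambda>x. coeff (f x) k) \<in> G" "\<forall>k. (\<lambda>x. coeff (g x) k) \<in> G"
    by (auto simp: coeffG_def)
  show "(\<lambda>x. f x * g x) \<in> coeffG G"
    unfolding coeffG_def
  proof (intro CollectI allI)
    fix k
    have "(\<lambda>x. \<Sum>i\<le>k. coeff (f x) i * coeff (g x) (k - i)) \<in> G"
      by (intro rclosed_sum rclosed_mult G) (use a in auto)
    then show "(\<lambda>x. coeff (f x * g x) k) \<in> G" unfolding coeff_mult .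
  qed
qed

definition polyG :: "(real \<Rightarrow> complex) set" where
  "polyG = {f. \<exists>q. \<forall>t. f t = poly q (of_real t)}"

lemma rclosed_polyG: "rclosed polyG"
  unfolding rclosed_def polyG_def
proof (intro conjI ballI allI; simp)
  fix c :: complex show "\<exists>q. \<forall>t. c = poly q (of_real t)" by (rule exI[of _ "[:c:]"]) simp
next
  fix f g :: "real \<Rightarrow> complex"
  assume "\<exists>q. \<forall>t. f t = poly q (of_real t)" "\<exists>q. \<forall>t. g t = poly q (of_real t)"
  then obtain p q where *: "\<forall>t. f t = poly p (of_real t)" "\<forall>t. g t = poly q (of_real t)" by blast
  then show "\<exists>q. \<forall>t. f t + g t = poly q (of_real t)"
    by (auto intro!: exI[of _ "p + q"])
  from * show "\<exists>q. \<forall>t. f t * g t = poly q (of_real t)"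
    by (auto intro!: exI[of _ "p * q"])
qed

lemma rclosed_cont: "rclosed {f :: 'a::topological_space \<Rightarrow> complex. continuous_on UNIV f}"
  unfolding rclosed_def by (auto intro: continuous_intros)


lemma charpoly_entry:
  fixes B :: "'a::comm_ring_1^'n^'n"
  shows
  "(\<chi> i j. (if i = j then [:0, 1:] else 0) - [:B $ i $ j:]) $ i $ j =
     (if i = j then [:- (B $ i $ j), 1:] else [:- (B $ i $ j):])"
  by (auto simp: poly_eq_iff coeff_pCons split: nat.splits)

lemma charpoly_deg:
  fixes B :: "complex^'n^'n"
  shows "degree (char_poly_mat B) = CARD('n) \<and> coeff (char_poly_mat B) CARD('n) = 1"
proof -
  define E where "E = (\<chi> i j. (if i = j then [:0, 1:] else 0) - [:B $ i $ j:])"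
  have Eij: "E $ i $ j = (if i = j then [:- (B $ i $ j), 1:] else [:- (B $ i $ j):])" for i j
    unfolding E_def by (rule charpoly_entry)
  define T where "T p = of_int (sign p) * (\<Prod>i\<in>UNIV. E $ i $ p i)" for p :: "'n \<Rightarrow> 'n"
  have cp: "char_poly_mat B = (\<Sum>p\<in>{p. p permutes UNIV}. T p)"
    unfolding char_poly_mat_def Determinants.det_def E_def[symmetric] T_def ..
  have degT: "degree (T p) \<le> card {i. p i = i}" for p
  proof -
    have "degree (T p) \<le> degree (of_int (sign p) :: complex poly) + degree (\<Prod>i\<in>UNIV. E $ i $ p i)"
      unfolding T_def by (rule degree_mult_le)
    also have "\<dots> = degree (\<Prod>i\<in>UNIV. E $ i $ p i)" by simp
    also have "\<dots> \<le> (\<Sum>i\<in>UNIV. degree (E $ i $ p i))"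
      using degree_prod_sum_le[of UNIV "\<lambda>i. E $ i $ p i"] by (simp add: o_def)
    also have "\<dots> \<le> (\<Sum>i\<in>UNIV. (if p i = i then 1 else 0))"
      by (intro sum_mono) (auto simp: Eij)
    also have "\<dots> = card {i. p i = i}"
      by (simp add: sum.If_cases)
    finally show ?thesis .
  qed
  have c0: "coeff (T p) k = 0" if "k > CARD('n)" for p k
  proof -
    have "card {i. p i = i} \<le> CARD('n)" by (rule card_mono) auto
    with degT[of p] that show ?thesis by (intro coeff_eq_0) auto
  qed
  have c1: "coeff (T p) CARD('n) = 0" if "p \<noteq> id" for p
  proof -
    from that obtain j where "p j \<noteq> j" by (auto simp: fun_eq_iff)
    then have "{i. p i = i} \<subset> UNIV" by auto
    then have "card {i. p i = i} < CARD('n)" by (rule psubset_card_mono[rotated]) simp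
    with degT[of p] show ?thesis by (intro coeff_eq_0) auto
  qed
  have cid: "coeff (T id) CARD('n) = 1"
  proof -
    have "T id = (\<Prod>i\<in>UNIV. [:- (B $ i $ i), 1:])"
      unfolding T_def by (simp add: Eij)
    moreover have "degree (\<Prod>i\<in>(UNIV::'n set). [:- (B $ i $ i), 1:]) = CARD('n)"
      by (subst degree_prod_eq_sum_degree) auto
    moreover have "lead_coeff (\<Prod>i\<in>(UNIV::'n set). [:- (B $ i $ i), 1:]) = 1"
      by (simp add: lead_coeff_prod)
    ultimately show ?thesis by simp
  qed
  have fin: "finite {p. p permutes (UNIV::'n set)}" by (simp add: finite_permutations)
  have "coeff (char_poly_mat B) CARD('n) = (\<Sum>p\<in>{p. p permutes UNIV}. coeff (T p) CARD('n))"
    unfolding cp coeff_sum ..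
  also have "\<dots> = (\<Sum>p\<in>{id}. coeff (T p) CARD('n))"
    by (rule sum.mono_neutral_right[OF fin]) (auto simp: permutes_id c1)
  also have "\<dots> = coeff (T id) CARD('n)" by simp
  finally have lc: "coeff (char_poly_mat B) CARD('n) = 1" using cid by simp
  have "degree (char_poly_mat B) \<le> CARD('n)"
  proof (rule degree_le, intro allI impI)
    fix k assume "CARD('n) < k"
    then show "coeff (char_poly_mat B) k = 0" unfolding cp coeff_sum by (simp add: c0)
  qed
  moreover have "CARD('n) \<le> degree (char_poly_mat B)" using lc by (intro le_degree) simp
  ultimately show ?thesis using lc by simp
qed

lemma poly_det: "poly (Determinants.det P) z = Determinants.det (\<chi> i j. poly (P $ i $ j) z)"
  unfolding Determinants.det_def by (simp add: poly_sum poly_prod)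


definition cpoly :: "complex^'n^'m \<Rightarrow> complex poly" where
  "cpoly A = char_poly_mat (conj_transpose A ** A)"

lemma quad_form:
  fixes A :: "complex^'n^'m" and v :: "complex^'n"
  shows "(\<Sum>i\<in>UNIV. cnj (v $ i) * ((conj_transpose A ** A) *v v) $ i)
       = (\<Sum>k\<in>UNIV. cnj ((A *v v) $ k) * (A *v v) $ k)"
proof -
  define w where "w = A *v v"
  have e1: "((conj_transpose A ** A) *v v) $ i = (\<Sum>k\<in>UNIV. cnj (A $ k $ i) * w $ k)" for i
    unfolding matrix_vector_mul_assoc[symmetric] w_def
    by (simp add: matrix_vector_mult_def conj_transpose_def)
  have "(\<Sum>i\<in>UNIV. cnj (v $ i) * ((conj_transpose A ** A) *v v) $ i)
     = (\<Sum>i\<in>UNIV. \<Sum>k\<in>UNIV. cnj (A $ k $ i * v $ i) * w $ k)"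
    unfolding e1 sum_distrib_left by (simp add: mult_ac)
  also have "\<dots> = (\<Sum>k\<in>UNIV. \<Sum>i\<in>UNIV. cnj (A $ k $ i * v $ i) * w $ k)"
    by (rule sum.swap)
  also have "\<dots> = (\<Sum>k\<in>UNIV. cnj (w $ k) * w $ k)"
    unfolding sum_distrib_right[symmetric] cnj_sum[symmetric]
    by (simp add: w_def matrix_vector_mult_def)
  finally show ?thesis unfolding w_def .
qed

lemma cpoly_root_real:
  fixes A :: "complex^'n^'m"
  assumes "poly (cpoly A) z = 0"
  shows "Im z = 0"
proof -
  define H where "H = conj_transpose A ** A"
  define K where "K = (\<chi> i j. poly ((if i = j then [:0, 1:] else 0) - [:H $ i $ j:]) z)"
  have "Determinants.det K = 0"
    using assms unfolding cpoly_def char_poly_mat_def H_def[symmetric] K_def poly_det by simp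
  then have "\<not> invertible K" using invertible_det_nz by blast
  then have "\<not> (\<exists>B. B ** K = Finite_Cartesian_Product.mat 1)" using invertible_left_inverse by blast
  then obtain v where v: "K *v v = 0" "v \<noteq> 0" using matrix_left_invertible_ker by blast
  have Hv: "(H *v v) $ i = z * v $ i" for i
  proof -
    have K0: "(K *v v) $ i = 0" using v by simp
    have Kij: "K $ i $ j = (if i = j then z else 0) - H $ i $ j" for j
      by (simp add: K_def)
    have "(K *v v) $ i = (\<Sum>j\<in>UNIV. ((if i = j then z else 0) - H $ i $ j) * v $ j)"
      by (simp add: matrix_vector_mult_def Kij)
    also have "\<dots> = (\<Sum>j\<in>UNIV. (if i = j then z * v $ j else 0)) - (\<Sum>j\<in>UNIV. H $ i $ j * v $ j)"
      unfolding sum_subtractf[symmetric] by (rule sum.cong) (auto simp: algebra_simps)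
    also have "\<dots> = z * v $ i - (H *v v) $ i"
      by (simp add: matrix_vector_mult_def)
    finally have "(K *v v) $ i = z * v $ i - (H *v v) $ i" .
    with K0 show ?thesis by simp
  qed
  define w where "w = A *v v"
  have "(\<Sum>i\<in>UNIV. cnj (v $ i) * (H *v v) $ i) = (\<Sum>k\<in>UNIV. cnj (w $ k) * w $ k)"
    unfolding H_def w_def by (rule quad_form)
  note qf = this
  have eq: "z * of_real (\<Sum>i\<in>UNIV. (cmod (v $ i))\<^sup>2) = of_real (\<Sum>k\<in>UNIV. (cmod (w $ k))\<^sup>2)"
  proof -
    have sq: "x * cnj x = complex_of_real ((cmod x)\<^sup>2)" for x
      by (rule complex_norm_square[symmetric])
    from qf have "(\<Sum>i\<in>UNIV. z * (v $ i * cnj (v $ i))) = (\<Sum>k\<in>UNIV. w $ k * cnj (w $ k))"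
      by (simp add: Hv mult_ac)
    then show ?thesis unfolding sq sum_distrib_left[symmetric] of_real_sum[symmetric] .
  qed
  have "(\<Sum>i\<in>UNIV. (cmod (v $ i))\<^sup>2) > 0"
  proof -
    from v(2) obtain j where "v $ j \<noteq> 0" by (metis Finite_Cartesian_Product.vec_eq_iff zero_index)
    then have "(cmod (v $ j))\<^sup>2 > 0" by simp
    also have "\<dots> \<le> (\<Sum>i\<in>UNIV. (cmod (v $ i))\<^sup>2)"
      by (rule member_le_sum) auto
    finally show ?thesis .
  qed
  then have R1: "(\<Sum>i\<in>UNIV. (cmod (v $ i))\<^sup>2) \<noteq> 0" by simp
  define R1 where "R1 = (\<Sum>i\<in>UNIV. (cmod (v $ i))\<^sup>2)"
  define R2 where "R2 = (\<Sum>k\<in>UNIV. (cmod (w $ k))\<^sup>2)"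
  have "z * of_real R1 = of_real R2" "R1 \<noteq> 0" using eq R1 unfolding R1_def R2_def by auto
  then have "z = of_real R2 / of_real R1" by (simp add: eq_divide_eq)
  also have "\<dots> = of_real (R2 / R1)" by simp
  finally show ?thesis by simp
qed


definition Dfun :: "complex^'n^'m \<Rightarrow> complex" where
  "Dfun A = resultant_sub CARD('n) (CARD('n) - 1) (cpoly A) (pderiv (cpoly A))"

lemma coeffG_D: "P \<in> coeffG G \<Longrightarrow> (\<lambda>x. coeff (P x) k) \<in> G"
  by (simp add: coeffG_def)

lemma rclosed_if: "f \<in> G \<Longrightarrow> g \<in> G \<Longrightarrow> (\<lambda>x. if P then f x else g x) \<in> G"
  by (cases P) simp_all

lemma Dfun_G:
  fixes M :: "'x \<Rightarrow> complex^'n^'m"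
  assumes G: "rclosed G" and e: "\<And>i j. (\<lambda>x. M x $ i $ j) \<in> G"
    and c: "\<And>i j. (\<lambda>x. cnj (M x $ i $ j)) \<in> G"
  shows "(\<lambda>x. Dfun (M x)) \<in> G"
proof -
  have CG: "rclosed (coeffG G)" by (rule rclosed_coeffG[OF G])
  have H: "(\<lambda>x. (conj_transpose (M x) ** M x) $ i $ j) \<in> G" for i j
  proof -
    have "(\<lambda>x. \<Sum>k\<in>UNIV. cnj (M x $ k $ i) * M x $ k $ j) \<in> G"
      by (intro rclosed_sum rclosed_mult G e c)
    then show ?thesis by (simp add: matrix_matrix_mult_def conj_transpose_def)
  qed
  have Hc: "(\<lambda>x. [:(conj_transpose (M x) ** M x) $ i $ j:]) \<in> coeffG G" for i j
    unfolding coeffG_def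
  proof (intro CollectI allI)
    fix k show "(\<lambda>x. coeff [:(conj_transpose (M x) ** M x) $ i $ j:] k) \<in> G"
      by (cases k) (simp_all add: H rclosed_const[OF G])
  qed
  have CP: "(\<lambda>x. cpoly (M x)) \<in> coeffG G"
    unfolding cpoly_def char_poly_mat_def
    by (intro rclosed_det[OF CG]) (simp add: rclosed_diff[OF CG] rclosed_const[OF CG] Hc)
  have PD: "(\<lambda>x. pderiv (cpoly (M x))) \<in> coeffG G"
    unfolding coeffG_def
  proof (intro CollectI allI)
    fix k show "(\<lambda>x. coeff (pderiv (cpoly (M x))) k) \<in> G"
      unfolding coeff_pderiv by (intro rclosed_mult[OF G] rclosed_const[OF G] coeffG_D[OF CP])
  qed
  define N where "N = CARD('n) + (CARD('n) - 1)"
  have "(\<lambda>x. Determinant.det (sylvester_mat_sub CARD('n) (CARD('n) - 1) (cpoly (M x)) (pderiv (cpoly (M x))))) \<in> G"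
  proof (rule rclosed_jdet[OF G, of _ N])
    fix x show "sylvester_mat_sub CARD('n) (CARD('n) - 1) (cpoly (M x)) (pderiv (cpoly (M x))) \<in> carrier_mat N N"
      unfolding N_def sylvester_mat_sub_def by simp
  next
    fix i j assume ij: "i < N" "j < N"
    have "(\<lambda>x. if i < CARD('n) - 1
       then if i \<le> j \<and> j - i \<le> CARD('n) then coeff (cpoly (M x)) (CARD('n) + i - j) else 0
       else if i - (CARD('n) - 1) \<le> j \<and> j \<le> i then coeff (pderiv (cpoly (M x))) (i - j) else 0) \<in> G"
      by (intro rclosed_if coeffG_D[OF CP] coeffG_D[OF PD] rclosed_const[OF G])
    then show "(\<lambda>x. sylvester_mat_sub CARD('n) (CARD('n) - 1) (cpoly (M x)) (pderiv (cpoly (M x))) $$ (i, j)) \<in> G"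
      using ij unfolding N_def sylvester_mat_sub_def by simp
  qed
  then show ?thesis unfolding Dfun_def resultant_sub_def .
qed

lemma Dfun_cont: "continuous_on UNIV (Dfun :: complex^'n^'m \<Rightarrow> complex)"
proof -
  have "(\<lambda>A. Dfun (id A)) \<in> {f :: complex^'n^'m \<Rightarrow> complex. continuous_on UNIV f}"
    by (rule Dfun_G[OF rclosed_cont]) (auto intro!: continuous_intros)
  then show ?thesis by simp
qed

lemma line_entry:
  fixes B C :: "complex^'n^'m"
  shows "((1 - t) *\<^sub>R B + t *\<^sub>R C) $ i $ j = of_real (1 - t) * B $ i $ j + of_real t * C $ i $ j"
proof -
  have sc: "r *\<^sub>R (x::complex) = of_real r * x" for r x by (rule scaleR_conv_of_real)
  show ?thesis by (simp only: vector_add_component vector_scaleR_component sc)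
qed

lemma Dfun_line:
  fixes B C :: "complex^'n^'m"
  shows "\<exists>q. \<forall>t. Dfun ((1 - t) *\<^sub>R B + t *\<^sub>R C) = poly q (of_real t)"
proof -
  have "(\<lambda>t. Dfun ((1 - t) *\<^sub>R B + t *\<^sub>R C)) \<in> polyG"
  proof (rule Dfun_G[OF rclosed_polyG])
    fix i j
    show "(\<lambda>t. ((1 - t) *\<^sub>R B + t *\<^sub>R C) $ i $ j) \<in> polyG"
      unfolding polyG_def line_entry
      by (auto intro!: exI[of _ "[:B $ i $ j, C $ i $ j - B $ i $ j:]"] simp: algebra_simps)
    show "(\<lambda>t. cnj (((1 - t) *\<^sub>R B + t *\<^sub>R C) $ i $ j)) \<in> polyG"
      unfolding polyG_def line_entry
      by (auto intro!: exI[of _ "[:cnj (B $ i $ j), cnj (C $ i $ j) - cnj (B $ i $ j):]"] simp: algebra_simps)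
  qed
  then show ?thesis unfolding polyG_def by simp
qed


lemma Dfun_iff:
  fixes A :: "complex^'n^'m"
  shows "distinct_singular_values A \<longleftrightarrow> Dfun A \<noteq> 0"
proof -
  define p where "p = cpoly A"
  define N where "N = CARD('n)"
  have dp: "degree p = N" and lc: "coeff p N = 1"
    using charpoly_deg[of "conj_transpose A ** A"] unfolding p_def cpoly_def N_def by auto
  have N1: "N \<ge> 1" unfolding N_def by simp
  have p0: "p \<noteq> 0" using lc by auto
  have dp': "degree (pderiv p) = N - 1" using dp by (simp add: degree_pderiv)
  have "coeff (pderiv p) (N - 1) = of_nat N * coeff p N"
    unfolding coeff_pderiv using N1 by simp
  then have p'0: "pderiv p \<noteq> 0" using lc N1 by auto
  have D: "Dfun A = resultant p (pderiv p)"
    unfolding Dfun_def resultant_sub p_def[symmetric] dp dp' N_def ..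
  have s1: "Dfun A = 0 \<longleftrightarrow> (\<exists>z. poly p z = 0 \<and> poly (pderiv p) z = 0)"
  proof -
    have "Dfun A = 0 \<longleftrightarrow> degree (gcd p (pderiv p)) \<noteq> 0"
      unfolding D by (rule resultant_0_gcd)
    also have "\<dots> \<longleftrightarrow> (\<exists>z. poly p z = 0 \<and> poly (pderiv p) z = 0)"
    proof
      assume "degree (gcd p (pderiv p)) \<noteq> 0"
      then have "\<not> constant (poly (gcd p (pderiv p)))" by (simp add: constant_degree)
      then obtain z where "poly (gcd p (pderiv p)) z = 0" using fundamental_theorem_of_algebra by blast
      then have "[:-z, 1:] dvd gcd p (pderiv p)" by (simp add: poly_eq_0_iff_dvd)
      then have "[:-z, 1:] dvd p" "[:-z, 1:] dvd pderiv p" by (auto intro: dvd_trans)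
      then show "\<exists>z. poly p z = 0 \<and> poly (pderiv p) z = 0" by (auto simp: poly_eq_0_iff_dvd)
    next
      assume "\<exists>z. poly p z = 0 \<and> poly (pderiv p) z = 0"
      then obtain z where "poly p z = 0" "poly (pderiv p) z = 0" by blast
      then have "[:-z, 1:] dvd gcd p (pderiv p)" by (simp add: poly_eq_0_iff_dvd)
      moreover have "gcd p (pderiv p) \<noteq> 0" using p0 by simp
      ultimately have "degree [:-z, 1:] \<le> degree (gcd p (pderiv p))" by (rule dvd_imp_degree_le)
      then show "degree (gcd p (pderiv p)) \<noteq> 0" by simp
    qed
    finally show ?thesis .
  qed
  have s2: "(\<exists>z. poly p z = 0 \<and> poly (pderiv p) z = 0) \<longleftrightarrow> (\<exists>z. order z p \<ge> 2)"
  proof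
    assume "\<exists>z. poly p z = 0 \<and> poly (pderiv p) z = 0"
    then obtain z where z: "poly p z = 0" "poly (pderiv p) z = 0" by blast
    have "order z p = Suc (order z (pderiv p))" by (rule order_pderiv[OF p0 z(1)])
    moreover have "order z (pderiv p) \<noteq> 0" using z(2) p'0 order_root by blast
    ultimately show "\<exists>z. order z p \<ge> 2" by (intro exI[of _ z]) simp
  next
    assume "\<exists>z. order z p \<ge> 2"
    then obtain z where z: "order z p \<ge> 2" by blast
    then have pz: "poly p z = 0" using order_root by fastforce
    have "order z p = Suc (order z (pderiv p))" by (rule order_pderiv[OF p0 pz])
    then have "order z (pderiv p) \<noteq> 0" using z by simp
    then have "poly (pderiv p) z = 0" using order_root by blast
    then show "\<exists>z. poly p z = 0 \<and> poly (pderiv p) z = 0" using pz by blast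
  qed
  define f where "f = (\<lambda>z::complex. sqrt (Re z))"
  have sv: "singular_values A = image_mset f (proots p)"
    unfolding singular_values_def f_def p_def cpoly_def ..
  have real: "Im z = 0" if "z \<in># proots p" for z
  proof -
    have "poly p z = 0" using that p0 by simp
    then show ?thesis unfolding p_def by (rule cpoly_root_real)
  qed
  have finj: "x = y" if "x \<in># proots p" "y \<in># proots p" "f x = f y" for x y
    using that real[of x] real[of y] unfolding f_def by (auto intro: complex_eqI)
  have s3: "distinct_singular_values A \<longleftrightarrow> (\<forall>z. order z p \<le> 1)"
  proof
    assume d: "distinct_singular_values A"
    show "\<forall>z. order z p \<le> 1"
    proof
      fix z
      have fin: "finite {x. x \<in># proots p \<and> f z = f x}" by (rule finite_subset[of _ "set_mset (proots p)"]) auto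
      show "order z p \<le> 1"
      proof (cases "z \<in># proots p")
        case True
        have "order z p = count (proots p) z" using p0 by simp
        also have "\<dots> \<le> (\<Sum>x | x \<in># proots p \<and> f z = f x. count (proots p) x)"
          by (rule member_le_sum[OF _ _ fin]) (use True in auto)
        also have "\<dots> = count (singular_values A) (f z)" unfolding sv count_image_mset' ..
        also have "\<dots> \<le> 1" using d unfolding distinct_singular_values_def by blast
        finally show ?thesis .
      next
        case False
        then have "count (proots p) z = 0" by (simp add: not_in_iff)
        then show ?thesis using p0 by simp
      qed
    qed
  next
    assume o: "\<forall>z. order z p \<le> 1"
    show "distinct_singular_values A"
      unfolding distinct_singular_values_def
    proof
      fix s
      define S where "S = {x. x \<in># proots p \<and> s = f x}"
      have "count (singular_values A) s = (\<Sum>x\<in>S. count (proots p) x)"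
        unfolding sv count_image_mset' S_def ..
      also have "\<dots> \<le> 1"
      proof (cases "S = {}")
        case True then show ?thesis by simp
      next
        case False
        then obtain x0 where x0: "x0 \<in> S" by blast
        then have "S = {x0}" using finj unfolding S_def by auto
        then show ?thesis using o p0 by simp
      qed
      finally show "count (singular_values A) s \<le> 1" .
    qed
  qed
  have ar: "\<And>n::nat. n \<le> 1 \<longleftrightarrow> \<not> n \<ge> 2" by arith
  show ?thesis unfolding s3 using s1 s2 ar by blast
qed


theorem corollary3p15:
  fixes \<Omega> :: "(complex^'n^'m) set"
  assumes "CARD('n) \<le> CARD('m)"
    and "convex \<Omega>"
    and "\<Omega> \<noteq> {}"
  shows "\<Omega> \<subseteq> closure {A \<in> \<Omega>. distinct_singular_values A}
     \<longleftrightarrow> (\<exists>A \<in> closure \<Omega>. distinct_singular_values A)"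
proof
  assume sub: "\<Omega> \<subseteq> closure {A \<in> \<Omega>. distinct_singular_values A}"
  from assms(3) obtain B where B: "B \<in> \<Omega>" by blast
  have "B \<in> closure {A \<in> \<Omega>. distinct_singular_values A}" using sub B by (rule subsetD)
  then have "{A \<in> \<Omega>. distinct_singular_values A} \<noteq> {}" by (metis closure_empty empty_iff)
  then obtain A where A: "A \<in> \<Omega>" "distinct_singular_values A" by auto
  have "A \<in> closure \<Omega>" using closure_subset A(1) by (rule subsetD)
  then show "\<exists>A \<in> closure \<Omega>. distinct_singular_values A" using A(2) by (rule bexI[rotated])
next
  assume "\<exists>A \<in> closure \<Omega>. distinct_singular_values A"
  then obtain A0 where A0c: "A0 \<in> closure \<Omega>" and A0d: "distinct_singular_values A0" by blast
  have A0D: "Dfun A0 \<noteq> 0" using A0d by (rule Dfun_iff[THEN iffD1])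
  have "continuous_on UNIV (Dfun :: complex^'n^'m \<Rightarrow> complex)" by (rule Dfun_cont)
  then have "isCont Dfun A0" by (simp add: continuous_on_eq_continuous_at)
  then have "\<exists>\<epsilon>>0. \<forall>y. dist A0 y < \<epsilon> \<longrightarrow> Dfun y \<noteq> 0"
    using A0D by (rule continuous_at_avoid)
  then obtain \<epsilon> where \<epsilon>: "\<epsilon> > 0" "\<And>y. dist A0 y < \<epsilon> \<Longrightarrow> Dfun y \<noteq> 0"
    by blast
  have "\<exists>y\<in>\<Omega>. dist A0 y < \<epsilon>" using A0c \<epsilon>(1) by (rule closure_approachableD)
  then obtain C where C: "C \<in> \<Omega>" "dist A0 C < \<epsilon>" by blast
  have DC: "Dfun C \<noteq> 0" using C(2) by (rule \<epsilon>(2))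
  show "\<Omega> \<subseteq> closure {A \<in> \<Omega>. distinct_singular_values A}"
  proof
    fix B assume B: "B \<in> \<Omega>"
    show "B \<in> closure {A \<in> \<Omega>. distinct_singular_values A}"
      unfolding closure_approachable
    proof (intro allI impI)
      fix e :: real assume e: "e > 0"
      obtain q where q: "\<And>t. Dfun ((1 - t) *\<^sub>R B + t *\<^sub>R C) = poly q (of_real t)"
        using Dfun_line[of B C] by blast
      have "poly q (of_real 1) \<noteq> 0" using q[of 1] DC by simp
      then have q0: "q \<noteq> 0" by auto
      have "finite {z. poly q z = 0}" using q0 by (rule poly_roots_finite)
      then have "finite (of_real ` {t::real. poly q (of_real t) = 0} :: complex set)"
        by (rule finite_subset[rotated]) auto
      then have finR: "finite {t::real. poly q (of_real t) = 0}"
        by (rule finite_imageD) (auto simp: inj_on_def)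
      define \<delta> where "\<delta> = min 1 (e / (norm (C - B) + 1))"
      have np: "0 < norm (C - B) + 1" using norm_ge_zero[of "C - B"] by linarith
      have \<delta>0: "\<delta> > 0" unfolding \<delta>_def using e np by simp
      have "infinite {0<..<\<delta>}" using \<delta>0 by simp
      then have "infinite ({0<..<\<delta>} - {t::real. poly q (of_real t) = 0})"
        by (rule Diff_infinite_finite[OF finR])
      then obtain t where "t \<in> {0<..<\<delta>} - {t::real. poly q (of_real t) = 0}"
        by (metis finite.emptyI ex_in_conv)
      then have t: "t \<in> {0<..<\<delta>}" "poly q (of_real t) \<noteq> 0" by auto
      define X where "X = (1 - t) *\<^sub>R B + t *\<^sub>R C"
      have t1: "t \<le> 1" "t > 0" using t(1) unfolding \<delta>_def by auto
      have "X \<in> \<Omega>" unfolding X_def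
        by (rule convexD[OF assms(2) B C(1)]) (use t1 in auto)
      moreover have "Dfun X \<noteq> 0" using q[of t] t(2) unfolding X_def by simp
      then have "distinct_singular_values X" by (rule Dfun_iff[THEN iffD2])
      moreover have "dist X B < e"
      proof -
        have "X - B = t *\<^sub>R (C - B)" unfolding X_def by (simp add: algebra_simps)
        then have "dist X B = t * norm (C - B)" using t1 by (simp add: dist_norm)
        also have "\<dots> \<le> t * (norm (C - B) + 1)" using t1 by simp
        also have "\<dots> < (e / (norm (C - B) + 1)) * (norm (C - B) + 1)"
          using t(1) unfolding \<delta>_def by (intro mult_strict_right_mono) (use np in auto)
        also have "\<dots> = e" using np by simp
        finally show ?thesis .
      qed
      ultimately show "\<exists>y\<in>{A \<in> \<Omega>. distinct_singular_values A}. dist y B < e" by blast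
    qed
  qed
qed

end
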